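(* Let $n\ge 1$ and let $\pi$ be a layered permutation of length $n$ which is not a decreasing permutation of even length. Then $\zeta_n$ contains a subsequence order-isomorphic to $\pi$.
   Context: A permutation of length $n$ is a word containing each letter of $[n]$ exactly once. For permutations $\pi$ of length $m$ and $\sigma$ of length $n$, $\pi\oplus\sigma$ is the permutation with $(\pi\oplus\sigma)(i)=\pi(i)$ for $i\le m$ and $\sigma(i-m)+m$ for $i>m$. A permutation is layered if it is a direct sum of decreasing permutations. Two words $u,v$ of length $k$ are order-isomorphic if $u(i)>u(j)\iff v(i)>v(j)$ for all $i,j$; a word $w$ contains a subsequence order-isomorphic to $\pi$ if some $w(i_1)\cdots w(i_n)$ with $i_1<\cdots<i_n$ is order-isomorphic to $\pi$. The word $z_n$ is the concatenation of $n$ runs $r_1\cdots r_n$, where for odd $k$, $r_k$ lists the odd integers in $[n]$ increasingly and for even $k$, $r_k$ lists the even integers in $[n]$ decreasingly. The permutation $\zeta_n$ of length $|z_n|$ is the unique permutation such that for $i\ne j$: $\zeta_n(i)>\zeta_n(j)$ iff either $z_n(i)>z_n(j)$, or $z_n(i)=z_n(j)$ and $i<j$. *)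

theory Defs
  imports Main "HOL-Library.Sublist"
begin

text \<open>Positions are 0-indexed
  internally (nth), which does not affect any of the notions below.\<close>

definition is_perm :: "nat list \<Rightarrow> bool" where
  "is_perm p \<longleftrightarrow> distinct p \<and> set p = {1..length p}"

definition decperm :: "nat \<Rightarrow> nat list" where
  "decperm k = rev [1..<k+1]"

definition dsum :: "nat list \<Rightarrow> nat list \<Rightarrow> nat list" where
  "dsum p s = p @ map (\<lambda>x. x + length p) s"

definition layered :: "nat list \<Rightarrow> bool" where
  "layered p \<longleftrightarrow> (\<exists>ks. p = foldl dsum [] (map decperm ks))"

definition order_iso :: "nat list \<Rightarrow> nat list \<Rightarrow> bool" where
  "order_iso u v \<longleftrightarrow> length u = length v \<and>
     (\<forall>i<length u. \<forall>j<length u. u ! i > u ! j \<longleftrightarrow> v ! i > v ! j)"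

definition contains :: "nat list \<Rightarrow> nat list \<Rightarrow> bool" where
  "contains w pi \<longleftrightarrow> (\<exists>u. subseq u w \<and> order_iso u pi)"

definition zrun :: "nat \<Rightarrow> nat \<Rightarrow> nat list" where
  "zrun n k = (if odd k then filter odd [1..<n+1] else rev (filter even [1..<n+1]))"

definition zword :: "nat \<Rightarrow> nat list" where
  "zword n = concat (map (zrun n) [1..<n+1])"

text \<open>zeta_n: the value at position i is one plus the number of positions j
  with zeta(j) < zeta(i), i.e. z(j) < z(i), or z(j) = z(i) and i < j.\<close>
definition zeta :: "nat \<Rightarrow> nat list" where
  "zeta n = (let z = zword n in
     map (\<lambda>i. Suc (card {j. j < length z \<and> (z ! j < z ! i \<or> (z ! j = z ! i \<and> i < j))}))
         [0..<length z])"

end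

theory Submission
  imports Defs
begin


definition keyless :: "nat \<times> nat \<Rightarrow> nat \<times> nat \<Rightarrow> bool" where
  "keyless x y \<longleftrightarrow> snd x < snd y \<or> (snd x = snd y \<and> fst y < fst x)"

definition posless :: "nat \<times> nat \<Rightarrow> nat \<times> nat \<Rightarrow> bool" where
  "posless x y \<longleftrightarrow> fst x < fst y \<or> (fst x = fst y \<and>
     (if odd (fst x) then snd x < snd y else snd y < snd x))"

definition cellok :: "nat \<Rightarrow> nat \<times> nat \<Rightarrow> bool" where
  "cellok n c \<longleftrightarrow> 1 \<le> fst c \<and> fst c \<le> n \<and> 1 \<le> snd c \<and> snd c \<le> n \<and> (odd (fst c) \<longleftrightarrow> odd (snd c))"

definition emb :: "(nat \<times> nat) list \<Rightarrow> nat list \<Rightarrow> bool" where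
  "emb cs p \<longleftrightarrow> length cs = length p \<and>
     (\<forall>i<length p. \<forall>j<length p. p ! j < p ! i \<longleftrightarrow> keyless (cs ! j) (cs ! i))"

definition ycells :: "nat \<Rightarrow> (nat \<times> nat) list" where
  "ycells n = concat (map (\<lambda>k. map (Pair k) (zrun n k)) [1..<n+1])"

lemma posless_trans: "posless x y \<Longrightarrow> posless y z \<Longrightarrow> posless x z"
  unfolding posless_def by (auto split: if_splits)

lemma posless_irrefl: "\<not> posless x x"
  unfolding posless_def by auto

lemma sorted_subseq:
  assumes tr: "\<And>x y z. P x y \<Longrightarrow> P y z \<Longrightarrow> P x z" and irr: "\<And>x. \<not> P x x"
  shows "sorted_wrt P xs \<Longrightarrow> sorted_wrt P ys \<Longrightarrow> set xs \<subseteq> set ys \<Longrightarrow> subseq xs ys"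
proof (induction ys arbitrary: xs)
  case Nil
  then show ?case by simp
next
  case (Cons y ys)
  show ?case
  proof (cases xs)
    case Nil
    then show ?thesis by simp
  next
    case (Cons x xs')
    show ?thesis
    proof (cases "x = y")
      case True
      have "set xs' \<subseteq> set ys"
      proof
        fix z assume z: "z \<in> set xs'"
        with Cons.prems(1) \<open>xs = x # xs'\<close> have "P x z" by simp
        hence "z \<noteq> y" using True irr by auto
        moreover have "z \<in> set (y # ys)" using Cons.prems(3) \<open>xs = x # xs'\<close> z by auto
        ultimately show "z \<in> set ys" by simp
      qed
      hence "subseq xs' ys" using Cons.IH[of xs'] Cons.prems \<open>xs = x # xs'\<close> by simp
      then show ?thesis using True \<open>xs = x # xs'\<close> by simp
    next
      case False
      have xin: "x \<in> set ys" using Cons.prems(3) \<open>xs = x # xs'\<close> False by auto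
      hence yx: "P y x" using Cons.prems(2) by simp
      have "set xs \<subseteq> set ys"
      proof
        fix z assume z: "z \<in> set xs"
        have "z \<noteq> y"
        proof
          assume "z = y"
          hence "z \<noteq> x" using False by simp
          hence "z \<in> set xs'" using z \<open>xs = x # xs'\<close> by simp
          hence "P x z" using Cons.prems(1) \<open>xs = x # xs'\<close> by simp
          hence "P y y" using tr[OF yx] \<open>z = y\<close> by simp
          thus False using irr by simp
        qed
        thus "z \<in> set ys" using Cons.prems(3) z by auto
      qed
      hence "subseq xs ys" using Cons.IH[of xs] Cons.prems by simp
      then show ?thesis by (rule list_emb_Cons)
    qed
  qed
qed

lemma subseq_map_ex:
  "subseq xs (map f ys) \<Longrightarrow> \<exists>zs. subseq zs ys \<and> xs = map f zs"
proof (induction ys arbitrary: xs)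
  case Nil
  then show ?case by auto
next
  case (Cons y ys)
  show ?case
  proof (cases xs)
    case Nil
    then show ?thesis by auto
  next
    case (Cons x xs')
    show ?thesis
    proof (cases "x = f y")
      case True
      from Cons.prems \<open>xs = x # xs'\<close> have "subseq xs' (map f ys)"
        using True by simp
      then obtain zs where "subseq zs ys" "xs' = map f zs" using Cons.IH by blast
      then show ?thesis using True \<open>xs = x # xs'\<close> by (intro exI[of _ "y # zs"]) auto
    next
      case False
      from Cons.prems \<open>xs = x # xs'\<close> False have "subseq xs (map f ys)" by simp
      then obtain zs where "subseq zs ys" "xs = map f zs" using Cons.IH by blast
      then show ?thesis by (intro exI[of _ zs]) auto
    qed
  qed
qed

lemma zword_ycells: "zword n = map snd (ycells n)"
  by (simp add: zword_def ycells_def map_concat comp_def)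

lemma set_zrun: "set (zrun n k) = {v. 1 \<le> v \<and> v \<le> n \<and> (odd v \<longleftrightarrow> odd k)}"
  by (auto simp: zrun_def)

lemma set_ycells: "set (ycells n) = {c. cellok n c}"
  by (auto simp: ycells_def set_zrun cellok_def)

lemma sorted_zrun: "sorted_wrt posless (map (Pair k) (zrun n k))"
proof (cases "odd k")
  case True
  have "sorted_wrt (<) (filter odd [1..<n+1])" by (rule sorted_wrt_filter) (rule sorted_wrt_upt)
  then show ?thesis using True by (simp add: zrun_def sorted_wrt_map posless_def)
next
  case False
  have "sorted_wrt (<) (filter even [1..<n+1])" by (rule sorted_wrt_filter) (rule sorted_wrt_upt)
  then show ?thesis using False by (simp add: zrun_def sorted_wrt_map posless_def sorted_wrt_rev)
qed

lemma sorted_ycells_aux: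
  "sorted_wrt posless (concat (map (\<lambda>k. map (Pair k) (zrun n k)) [1..<m+1]))"
proof (induction m)
  case 0
  then show ?case by simp
next
  case (Suc m)
  have e: "[1..<Suc m + 1] = [1..<m+1] @ [m+1]" by simp
  have cross: "\<forall>x\<in>set (concat (map (\<lambda>k. map (Pair k) (zrun n k)) [1..<m+1])).
     \<forall>y\<in>set (map (Pair (m+1)) (zrun n (m+1))). posless x y"
    by (auto simp: posless_def)
  show ?case unfolding e using Suc sorted_zrun[of "m+1" n] cross
    by (simp only: map_append concat_append sorted_wrt_append) simp
qed

lemma sorted_ycells: "sorted_wrt posless (ycells n)"
  unfolding ycells_def by (rule sorted_ycells_aux)

lemma zeta_len: "length (zeta n) = length (zword n)"
  by (simp add: zeta_def Let_def)

lemma zeta_less: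
  assumes i: "i < length (zword n)" and j: "j < length (zword n)"
  shows "zeta n ! j < zeta n ! i \<longleftrightarrow>
     (zword n ! j < zword n ! i \<or> (zword n ! j = zword n ! i \<and> i < j))"
proof -
  define z where "z = zword n"
  define L where "L = length z"
  define lt where "lt a b \<longleftrightarrow> z ! a < z ! b \<or> (z ! a = z ! b \<and> b < a)" for a b
  define St where "St b = {a. a < L \<and> lt a b}" for b
  have zi: "\<And>b. b < L \<Longrightarrow> zeta n ! b = Suc (card (St b))"
    by (simp add: zeta_def Let_def z_def L_def St_def lt_def)
  have fin: "\<And>b. finite (St b)" by (simp add: St_def)
  have mono: "\<And>a b. a < L \<Longrightarrow> lt a b \<Longrightarrow> card (St a) < card (St b)"
  proof -
    fix a b assume a: "a < L" and ab: "lt a b"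
    have "St a \<subseteq> St b" by (auto simp: St_def lt_def) (use ab in \<open>auto simp: lt_def\<close>)
    moreover have "a \<in> St b" "a \<notin> St a" using a ab by (auto simp: St_def lt_def)
    ultimately have "St a \<subset> St b" by blast
    thus "card (St a) < card (St b)" using fin by (simp add: psubset_card_mono)
  qed
  have "i < L" "j < L" using i j by (auto simp: L_def z_def)
  have "zeta n ! j < zeta n ! i \<longleftrightarrow> lt j i"
  proof
    assume "lt j i" thus "zeta n ! j < zeta n ! i" using mono \<open>i<L\<close> \<open>j<L\<close> zi by simp
  next
    assume h: "zeta n ! j < zeta n ! i"
    show "lt j i"
    proof (rule ccontr)
      assume "\<not> lt j i"
      hence "i = j \<or> lt i j" by (auto simp: lt_def)
      thus False
      proof
        assume "i = j" thus False using h by simp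
      next
        assume "lt i j" thus False using h mono \<open>i<L\<close> \<open>j<L\<close> zi by fastforce
      qed
    qed
  qed
  thus ?thesis by (simp add: lt_def z_def)
qed

lemma ycells_key:
  assumes i: "i < length (ycells n)" and j: "j < length (ycells n)"
  shows "zeta n ! j < zeta n ! i \<longleftrightarrow> keyless (ycells n ! j) (ycells n ! i)"
proof -
  define y where "y = ycells n"
  have so: "sorted_wrt posless y" by (simp add: y_def sorted_ycells)
  have lz: "length (zword n) = length y" by (simp add: zword_ycells y_def)
  have zn: "\<And>a. a < length y \<Longrightarrow> zword n ! a = snd (y ! a)" by (simp add: zword_ycells y_def)
  have i': "i < length y" "j < length y" using i j by (auto simp: y_def)
  have eq: "snd (y ! j) = snd (y ! i) \<Longrightarrow> (i < j \<longleftrightarrow> fst (y ! i) < fst (y ! j))"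
  proof
    assume s: "snd (y ! j) = snd (y ! i)" and ij: "i < j"
    have "posless (y ! i) (y ! j)" using sorted_wrt_nth_less[OF so ij i'(2)] .
    thus "fst (y ! i) < fst (y ! j)" using s by (auto simp: posless_def split: if_splits)
  next
    assume s: "snd (y ! j) = snd (y ! i)" and f: "fst (y ! i) < fst (y ! j)"
    show "i < j"
    proof (rule ccontr)
      assume "\<not> i < j"
      hence "j < i \<or> j = i" by auto
      thus False
      proof
        assume ji: "j < i"
        have "posless (y ! j) (y ! i)" using sorted_wrt_nth_less[OF so ji i'(1)] .
        thus False using f by (auto simp: posless_def split: if_splits)
      next
        assume "j = i" thus False using f by simp
      qed
    qed
  qed
  have "zeta n ! j < zeta n ! i \<longleftrightarrow>
     (zword n ! j < zword n ! i \<or> (zword n ! j = zword n ! i \<and> i < j))"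
    using zeta_less[of i n j] i' lz by simp
  also have "\<dots> \<longleftrightarrow> keyless (y ! j) (y ! i)"
    using zn[OF i'(1)] zn[OF i'(2)] eq by (auto simp: keyless_def)
  finally show ?thesis by (simp add: y_def)
qed

lemma bridge:
  assumes e: "emb cs p" and so: "sorted_wrt posless cs" and ok: "\<forall>c\<in>set cs. cellok n c"
  shows "contains (zeta n) p"
proof -
  define y where "y = ycells n"
  have sy: "sorted_wrt posless y" by (simp add: y_def sorted_ycells)
  have "set cs \<subseteq> set y" using ok by (auto simp: y_def set_ycells)
  hence sub: "subseq cs y" using sorted_subseq[of posless cs y] posless_trans posless_irrefl so sy by blast
  have ly: "length y = length (zeta n)" by (simp add: y_def zeta_len zword_ycells)
  have "map fst (zip y (zeta n)) = y" using ly by simp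
  hence "subseq cs (map fst (zip y (zeta n)))" using sub by simp
  then obtain zs where zs: "subseq zs (zip y (zeta n))" "cs = map fst zs"
    using subseq_map_ex by blast
  define u where "u = map snd zs"
  have "subseq u (map snd (zip y (zeta n)))" unfolding u_def by (rule subseq_map[OF zs(1)])
  hence su: "subseq u (zeta n)" using ly by simp
  have setz: "set zs \<subseteq> set (zip y (zeta n))" using zs(1) by (auto elim: list_emb_set)
  have lens: "length u = length p" "length zs = length p"
    using e zs(2) by (auto simp: u_def emb_def)
  have "order_iso u p"
    unfolding order_iso_def
  proof (intro conjI allI impI)
    show "length u = length p" by (rule lens(1))
  next
    fix i j assume i: "i < length u" and j: "j < length u"
    have "zs ! i \<in> set (zip y (zeta n))" using setz i lens by auto
    then obtain a where a: "a < length y" "zs ! i = (y ! a, zeta n ! a)"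
      using ly by (auto simp: set_zip)
    have "zs ! j \<in> set (zip y (zeta n))" using setz j lens by auto
    then obtain b where b: "b < length y" "zs ! j = (y ! b, zeta n ! b)"
      using ly by (auto simp: set_zip)
    have ui: "u ! i = zeta n ! a" "cs ! i = y ! a" using a i lens zs(2) by (auto simp: u_def)
    have uj: "u ! j = zeta n ! b" "cs ! j = y ! b" using b j lens zs(2) by (auto simp: u_def)
    have "u ! j < u ! i \<longleftrightarrow> keyless (cs ! j) (cs ! i)"
      using ycells_key[of a n b] a b ui uj by (simp add: y_def)
    also have "\<dots> \<longleftrightarrow> p ! j < p ! i" using e i j lens by (auto simp: emb_def)
    finally show "u ! i > u ! j \<longleftrightarrow> p ! i > p ! j" by simp
  qed
  thus ?thesis using su by (auto simp: contains_def)
qed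



definition Lay :: "nat list \<Rightarrow> nat list" where
  "Lay ks = foldl dsum [] (map decperm ks)"

lemma dsum_assoc: "dsum (dsum p q) r = dsum p (dsum q r)"
  by (simp add: dsum_def add.assoc)

lemma dsum_Nil1[simp]: "dsum [] q = q" by (simp add: dsum_def)
lemma dsum_Nil2[simp]: "dsum p [] = p" by (simp add: dsum_def)

lemma foldl_dsum: "foldl dsum acc xs = dsum acc (foldl dsum [] xs)"
proof (induction xs arbitrary: acc)
  case Nil then show ?case by simp
next
  case (Cons x xs)
  have "foldl dsum acc (x # xs) = foldl dsum (dsum acc x) xs" by simp
  also have "\<dots> = dsum (dsum acc x) (foldl dsum [] xs)" by (rule Cons.IH)
  also have "\<dots> = dsum acc (dsum x (foldl dsum [] xs))" by (rule dsum_assoc)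
  also have "dsum x (foldl dsum [] xs) = foldl dsum x xs" by (rule Cons.IH[symmetric])
  finally show ?case by simp
qed

lemma Lay_Nil[simp]: "Lay [] = []" by (simp add: Lay_def)

lemma Lay_Cons: "Lay (a # ks) = dsum (decperm a) (Lay ks)"
  unfolding Lay_def by (simp add: foldl_dsum[of "decperm a"])

lemma decperm_0[simp]: "decperm 0 = []" by (simp add: decperm_def)

lemma Lay_filter: "Lay (filter (\<lambda>k. 0 < k) ks) = Lay ks"
  by (induction ks) (auto simp: Lay_Cons)

lemma length_decperm[simp]: "length (decperm a) = a" by (simp add: decperm_def)

lemma set_decperm: "set (decperm a) = {1..a}" by (auto simp: decperm_def)

lemma Lay_pos: "\<forall>x\<in>set (Lay ks). 1 \<le> x"
  by (induction ks) (auto simp: Lay_Cons dsum_def set_decperm)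

lemma decperm_nth: "i < a \<Longrightarrow> decperm a ! i = a - i"
  unfolding decperm_def by (simp add: rev_nth del: upt_Suc)

lemma keyless_asym: "keyless x y \<Longrightarrow> \<not> keyless y x"
  by (auto simp: keyless_def)

lemma dsum_emb:
  assumes e1: "emb ls p" and e2: "emb cs q"
    and cr: "\<forall>x\<in>set ls. \<forall>y\<in>set cs. keyless x y"
    and pb: "\<forall>x\<in>set p. x \<le> length p" and qb: "\<forall>x\<in>set q. 1 \<le> x"
  shows "emb (ls @ cs) (dsum p q)"
proof -
  have l1: "length ls = length p" and l2: "length cs = length q" using e1 e2 by (auto simp: emb_def)
  have E1: "\<And>i j. i < length p \<Longrightarrow> j < length p \<Longrightarrow> p ! j < p ! i \<longleftrightarrow> keyless (ls ! j) (ls ! i)"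
    using e1 by (auto simp: emb_def)
  have E2: "\<And>i j. i < length q \<Longrightarrow> j < length q \<Longrightarrow> q ! j < q ! i \<longleftrightarrow> keyless (cs ! j) (cs ! i)"
    using e2 by (auto simp: emb_def)
  show ?thesis unfolding emb_def
  proof (intro conjI allI impI)
    show "length (ls @ cs) = length (dsum p q)" using l1 l2 by (simp add: dsum_def)
  next
    fix i j assume i: "i < length (dsum p q)" and j: "j < length (dsum p q)"
    let ?lp = "length p"
    have li: "i < ?lp + length q" "j < ?lp + length q" using i j by (auto simp: dsum_def)
    have dn: "\<And>k. k < ?lp + length q \<Longrightarrow> dsum p q ! k = (if k < ?lp then p ! k else q ! (k - ?lp) + ?lp)"
      by (auto simp: dsum_def nth_append)
    have cn: "\<And>k. (ls @ cs) ! k = (if k < ?lp then ls ! k else cs ! (k - ?lp))"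
      using l1 by (auto simp: nth_append)
    have pin: "\<And>k. k < ?lp \<Longrightarrow> p ! k \<le> ?lp" using pb by auto
    have qin: "\<And>k. k < length q \<Longrightarrow> 1 \<le> q ! k" using qb by auto
    have lsin: "\<And>k. k < ?lp \<Longrightarrow> ls ! k \<in> set ls" using l1 by auto
    have csin: "\<And>k. k < length q \<Longrightarrow> cs ! k \<in> set cs" using l2 by auto
    show "dsum p q ! j < dsum p q ! i \<longleftrightarrow> keyless ((ls @ cs) ! j) ((ls @ cs) ! i)"
    proof (cases "i < ?lp")
      case True note iT = True
      show ?thesis
      proof (cases "j < ?lp")
        case True
        then show ?thesis using iT dn li cn E1 by simp
      next
        case False
        have "j - ?lp < length q" using li False by simp
        hence "keyless (ls ! i) (cs ! (j - ?lp))" using cr lsin[OF iT] csin by blast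
        hence "\<not> keyless (cs ! (j - ?lp)) (ls ! i)" by (rule keyless_asym)
        moreover have "p ! i < q ! (j - ?lp) + ?lp" using pin[OF iT] qin[OF \<open>j - ?lp < length q\<close>] by simp
        ultimately show ?thesis using iT False dn li cn by simp
      qed
    next
      case False note iF = False
      have iq: "i - ?lp < length q" using li False by simp
      show ?thesis
      proof (cases "j < ?lp")
        case True
        have "keyless (ls ! j) (cs ! (i - ?lp))" using cr lsin[OF True] csin[OF iq] by blast
        moreover have "p ! j < q ! (i - ?lp) + ?lp" using pin[OF True] qin[OF iq] by simp
        ultimately show ?thesis using iF True dn li cn by simp
      next
        case False
        have jq: "j - ?lp < length q" using li False by simp
        show ?thesis using iF False dn li cn E2[OF iq jq] by simp
      qed
    qed
  qed
qed

definition cpar :: "nat \<times> nat \<Rightarrow> bool" where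
  "cpar c \<longleftrightarrow> (odd (fst c) \<longleftrightarrow> odd (snd c))"

definition inreg :: "nat \<Rightarrow> nat \<Rightarrow> nat \<times> nat \<Rightarrow> bool" where
  "inreg R V c \<longleftrightarrow> V < snd c \<and> (R < fst c \<or> (fst c = R \<and> odd R))"

definition W :: "nat \<Rightarrow> nat \<Rightarrow> nat \<Rightarrow> nat list \<Rightarrow> bool" where
  "W R V N ks \<longleftrightarrow> (\<exists>cs. emb cs (Lay ks) \<and> sorted_wrt posless cs \<and>
     (\<forall>c\<in>set cs. cpar c \<and> inreg R V c \<and> fst c \<le> N \<and> snd c \<le> N))"

definition LW :: "nat \<Rightarrow> nat \<Rightarrow> nat \<Rightarrow> nat \<Rightarrow> nat \<Rightarrow> (nat \<times> nat) list \<Rightarrow> bool" where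
  "LW R V R' V' a ls \<longleftrightarrow> emb ls (decperm a) \<and> sorted_wrt posless ls \<and>
     (\<forall>c\<in>set ls. cpar c \<and> inreg R V c \<and> fst c \<le> R' \<and> snd c \<le> V')"

lemma W_Nil: "W R V N []"
  unfolding W_def by (intro exI[of _ "[]"]) (simp add: emb_def)

lemma inreg_mono: "inreg R' V' c \<Longrightarrow> R \<le> R' \<Longrightarrow> V \<le> V' \<Longrightarrow> inreg R V c"
  by (auto simp: inreg_def)

lemma W_mono: "W R' V' N ks \<Longrightarrow> R \<le> R' \<Longrightarrow> V \<le> V' \<Longrightarrow> W R V N ks"
  unfolding W_def by (blast intro: inreg_mono)

lemma compose:
  assumes L: "LW R V R' V' a ls" and Wr: "W R' V' N ks"
    and "R \<le> R'" "V \<le> V'" "R' \<le> N" "V' \<le> N"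
  shows "W R V N (a # ks)"
proof -
  obtain cs where cs: "emb cs (Lay ks)" "sorted_wrt posless cs"
    "\<forall>c\<in>set cs. cpar c \<and> inreg R' V' c \<and> fst c \<le> N \<and> snd c \<le> N"
    using Wr by (auto simp: W_def)
  have ls: "emb ls (decperm a)" "sorted_wrt posless ls"
    "\<forall>c\<in>set ls. cpar c \<and> inreg R V c \<and> fst c \<le> R' \<and> snd c \<le> V'"
    using L by (auto simp: LW_def)
  have cross: "\<forall>x\<in>set ls. \<forall>y\<in>set cs. keyless x y \<and> posless x y"
  proof (intro ballI)
    fix x y assume x: "x \<in> set ls" and y: "y \<in> set cs"
    have "fst x \<le> R'" "snd x \<le> V'" using ls(3) x by auto
    moreover have "inreg R' V' y" using cs(3) y by auto
    ultimately show "keyless x y \<and> posless x y"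
      by (cases "fst x = fst y") (auto simp: keyless_def posless_def inreg_def)
  qed
  have "emb (ls @ cs) (dsum (decperm a) (Lay ks))"
    using dsum_emb[OF ls(1) cs(1)] cross Lay_pos[of ks] by (auto simp: set_decperm)
  moreover have "sorted_wrt posless (ls @ cs)" using ls(2) cs(2) cross
    by (auto simp: sorted_wrt_append)
  moreover have "\<forall>c\<in>set (ls @ cs). cpar c \<and> inreg R V c \<and> fst c \<le> N \<and> snd c \<le> N"
    using ls(3) cs(3) assms(3-6) by (auto intro: inreg_mono)
  ultimately show ?thesis unfolding W_def Lay_Cons by blast
qed

lemma layer_emb:
  assumes len: "length ls = a"
    and h: "\<And>i j. i < j \<Longrightarrow> j < a \<Longrightarrow> fst (ls ! i) < fst (ls ! j) \<and> keyless (ls ! j) (ls ! i)"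
  shows "emb ls (decperm a) \<and> sorted_wrt posless ls"
proof
  show "sorted_wrt posless ls" unfolding sorted_wrt_iff_nth_less
    using h len by (auto simp: posless_def)
  show "emb ls (decperm a)" unfolding emb_def
  proof (intro conjI allI impI)
    show "length ls = length (decperm a)" using len by simp
  next
    fix i j assume i: "i < length (decperm a)" and j: "j < length (decperm a)"
    have i': "i < a" and j': "j < a" using i j by auto
    show "decperm a ! j < decperm a ! i \<longleftrightarrow> keyless (ls ! j) (ls ! i)"
    proof (cases "i < j")
      case True then show ?thesis using h[OF True j'] decperm_nth[OF i'] decperm_nth[OF j'] i' j' by simp
    next
      case False
      show ?thesis
      proof (cases "i = j")
        case True then show ?thesis by (auto simp: keyless_def)
      next
        case False
        hence ji: "j < i" using \<open>\<not> i < j\<close> by simp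
        have "keyless (ls ! i) (ls ! j)" using h[OF ji i'] by simp
        hence "\<not> keyless (ls ! j) (ls ! i)" by (rule keyless_asym)
        thus ?thesis using ji decperm_nth[OF i'] decperm_nth[OF j'] i' j' by simp
      qed
    qed
  qed
qed

definition nshape :: "nat \<Rightarrow> nat \<Rightarrow> nat \<Rightarrow> (nat \<times> nat) list" where
  "nshape r e a = map (\<lambda>i. (r + i, e - i)) [0..<a]"

definition eshape :: "nat \<Rightarrow> nat \<Rightarrow> nat \<Rightarrow> (nat \<times> nat) list" where
  "eshape r e a = map (\<lambda>i. if i = 0 then (r, e) else (r + i + 1, e + 1 - i)) [0..<a]"

lemma nshape_LW:
  assumes "0 < a" "odd r \<longleftrightarrow> odd e" "V + a \<le> e" "R < r \<or> (r = R \<and> odd R)"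
  shows "LW R V (r + a - 1) e a (nshape r e a)"
proof -
  have "emb (nshape r e a) (decperm a) \<and> sorted_wrt posless (nshape r e a)"
    by (rule layer_emb) (use assms in \<open>auto simp: nshape_def keyless_def\<close>)
  moreover have "\<forall>c\<in>set (nshape r e a). cpar c \<and> inreg R V c \<and> fst c \<le> r + a - 1 \<and> snd c \<le> e"
  proof
    fix c assume "c \<in> set (nshape r e a)"
    then obtain i where i: "i < a" "c = (r + i, e - i)" by (auto simp: nshape_def)
    have "odd (r + i) \<longleftrightarrow> odd (e - i)" using assms(2,3) i(1) by auto
    then show "cpar c \<and> inreg R V c \<and> fst c \<le> r + a - 1 \<and> snd c \<le> e"
      using i assms by (auto simp: cpar_def inreg_def)
  qed
  ultimately show ?thesis by (simp add: LW_def)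
qed

lemma eshape_LW:
  assumes "2 \<le> a" "odd r \<longleftrightarrow> odd e" "V + a \<le> e + 1" "R < r \<or> (r = R \<and> odd R)"
  shows "LW R V (r + a) e a (eshape r e a)"
proof -
  have "emb (eshape r e a) (decperm a) \<and> sorted_wrt posless (eshape r e a)"
    by (rule layer_emb) (use assms in \<open>auto simp: eshape_def keyless_def\<close>)
  moreover have "\<forall>c\<in>set (eshape r e a). cpar c \<and> inreg R V c \<and> fst c \<le> r + a \<and> snd c \<le> e"
  proof
    fix c assume "c \<in> set (eshape r e a)"
    then obtain i where i: "i < a" "c = (if i = 0 then (r, e) else (r + i + 1, e + 1 - i))"
      by (auto simp: eshape_def)
    show "cpar c \<and> inreg R V c \<and> fst c \<le> r + a \<and> snd c \<le> e"
    proof (cases "i = 0")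
      case True then show ?thesis using i assms by (auto simp: cpar_def inreg_def)
    next
      case False
      have "odd (r + i + 1) \<longleftrightarrow> odd (e + 1 - i)" using assms(2,3) i(1) by auto
      then show ?thesis using i assms False by (auto simp: cpar_def inreg_def)
    qed
  qed
  ultimately show ?thesis by (simp add: LW_def)
qed



lemma sumeq: "S + sum_list (a # rest) = (S + a) + sum_list (rest::nat list)" by simp

definition good :: "nat \<Rightarrow> nat \<Rightarrow> nat \<Rightarrow> bool" where
  "good R V S \<longleftrightarrow> R \<le> S \<and> V \<le> S \<and> \<not> (R = S \<and> V = S \<and> even S)"

lemma special:
  assumes "R \<le> S" "odd S" "V \<le> S" "even b" "0 < b"
  shows "W R V (S + sum_list [1, b]) [1, b]"
proof -
  have L1: "LW R V S (S + 2) 1 (nshape S (S + 2) 1)"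
  proof -
    have "R < S \<or> (S = R \<and> odd R)" using assms by (cases "R = S") auto
    thus ?thesis using nshape_LW[of 1 S "S + 2" V R] assms by simp
  qed
  have L2: "LW S (S + 2) (S + 1 + b) (S + 1 + b) b (eshape (S + 1) (S + 1 + b) b)"
    by (rule eshape_LW) (use assms in auto)
  have "W (S + 1 + b) (S + 1 + b) (S + sum_list [1, b]) []" by (rule W_Nil)
  hence "W S (S + 2) (S + sum_list [1, b]) [b]" by (rule compose[OF L2]) (use assms in auto)
  thus ?thesis by (rule compose[OF L1]) (use assms in auto)
qed

lemma caseOne:
  assumes "odd S" "R \<le> S" "V \<le> S"
    and IH2: "\<forall>S. even S \<and> \<not> (\<exists>b. rest = [b] \<and> even b) \<longrightarrow> W S S (S + sum_list rest) rest"
    and pos: "\<forall>x\<in>set rest. 0 < x"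
  shows "W R V (S + sum_list (1 # rest)) (1 # rest)"
proof (cases "\<exists>b. rest = [b] \<and> even b")
  case True
  then obtain b where b: "rest = [b]" "even b" by blast
  then show ?thesis using special[of R S V b] assms by simp
next
  case False
  have L: "LW R V (S + 1 + 1 - 1) (S + 1) 1 (nshape (S + 1) (S + 1) 1)"
    by (rule nshape_LW) (use assms in auto)
  have "W (S + 1) (S + 1) ((S + 1) + sum_list rest) rest" using IH2[rule_format, of "S + 1"] False assms(1) by simp
  thus ?thesis unfolding sumeq by (intro compose[OF L]) (use assms in auto)
qed

lemma caseA:
  assumes S: "odd S" and a: "0 < a"
    and IH1: "\<forall>R V S. good R V S \<longrightarrow> W R V (S + sum_list rest) rest"
    and IH2: "\<forall>S. even S \<and> \<not> (\<exists>b. rest = [b] \<and> even b) \<longrightarrow> W S S (S + sum_list rest) rest"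
    and pos: "\<forall>x\<in>set rest. 0 < x"
  shows "W S S (S + sum_list (a # rest)) (a # rest)"
proof (cases "even a")
  case True
  have L: "LW S S (S + a - 1) (S + a) a (nshape S (S + a) a)"
    by (rule nshape_LW) (use assms True in auto)
  have "good (S + a - 1) (S + a) (S + a)" using a by (auto simp: good_def)
  hence "W (S + a - 1) (S + a) ((S + a) + sum_list rest) rest" using IH1 by blast
  thus ?thesis unfolding sumeq by (intro compose[OF L]) (use assms in auto)
next
  case False
  show ?thesis
  proof (cases "a = 1")
    case True
    then show ?thesis using caseOne[OF S _ _ IH2 pos] by simp
  next
    case False
    have L: "LW S S (S + a) (S + a - 1) a (eshape S (S + a - 1) a)"
      by (rule eshape_LW) (use assms False \<open>\<not> even a\<close> in auto)
    have "good (S + a) (S + a - 1) (S + a)" using a by (auto simp: good_def)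
    hence "W (S + a) (S + a - 1) ((S + a) + sum_list rest) rest" using IH1 by blast
    thus ?thesis unfolding sumeq by (intro compose[OF L]) (use assms in auto)
  qed
qed

lemma caseB:
  assumes S: "1 \<le> S" and a: "0 < a"
    and IH1: "\<forall>R V S. good R V S \<longrightarrow> W R V (S + sum_list rest) rest"
    and IH2: "\<forall>S. even S \<and> \<not> (\<exists>b. rest = [b] \<and> even b) \<longrightarrow> W S S (S + sum_list rest) rest"
    and pos: "\<forall>x\<in>set rest. 0 < x"
  shows "W (S - 1) S (S + sum_list (a # rest)) (a # rest)"
proof (cases "even a")
  case True
  have L: "LW (S - 1) S (S + a - 1) (S + a) a (nshape S (S + a) a)"
    by (rule nshape_LW) (use assms True in auto)
  have "good (S + a - 1) (S + a) (S + a)" using a by (auto simp: good_def)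
  hence "W (S + a - 1) (S + a) ((S + a) + sum_list rest) rest" using IH1 by blast
  thus ?thesis unfolding sumeq by (intro compose[OF L]) (use assms in auto)
next
  case False note aodd = False
  show ?thesis
  proof (cases "even S")
    case True
    have L: "LW (S - 1) S (S - 1 + a - 1) (S + a) a (nshape (S - 1) (S + a) a)"
      by (rule nshape_LW) (use assms True aodd in auto)
    have "good (S - 1 + a - 1) (S + a) (S + a)" using a S by (auto simp: good_def)
    hence "W (S - 1 + a - 1) (S + a) ((S + a) + sum_list rest) rest" using IH1 by blast
    thus ?thesis unfolding sumeq by (intro compose[OF L]) (use assms in auto)
  next
    case False note Sodd = False
    show ?thesis
    proof (cases "a = 1")
      case True
      then show ?thesis using caseOne[of S "S - 1" S, OF _ _ _ IH2 pos] Sodd by simp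
    next
      case False
      have L: "LW (S - 1) S (S + a) (S + a - 1) a (eshape S (S + a - 1) a)"
        by (rule eshape_LW) (use assms False aodd Sodd in auto)
      have "good (S + a) (S + a - 1) (S + a)" using a by (auto simp: good_def)
      hence "W (S + a) (S + a - 1) ((S + a) + sum_list rest) rest" using IH1 by blast
      thus ?thesis unfolding sumeq by (intro compose[OF L]) (use assms in auto)
    qed
  qed
qed

lemma caseC:
  assumes S: "1 \<le> S" and a: "0 < a"
    and IH1: "\<forall>R V S. good R V S \<longrightarrow> W R V (S + sum_list rest) rest"
  shows "W S (S - 1) (S + sum_list (a # rest)) (a # rest)"
proof (cases "odd S")
  case True note Sodd = True
  show ?thesis
  proof (cases "odd a")
    case True
    have L: "LW S (S - 1) (S + a - 1) (S + a - 1) a (nshape S (S + a - 1) a)"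
      by (rule nshape_LW) (use assms True Sodd in auto)
    have "good (S + a - 1) (S + a - 1) (S + a)" using a by (auto simp: good_def)
    hence "W (S + a - 1) (S + a - 1) ((S + a) + sum_list rest) rest" using IH1 by blast
    thus ?thesis unfolding sumeq by (intro compose[OF L]) (use assms in auto)
  next
    case False
    have L: "LW S (S - 1) (S + a - 1) (S + a) a (nshape S (S + a) a)"
      by (rule nshape_LW) (use assms False Sodd in auto)
    have "good (S + a - 1) (S + a) (S + a)" using a by (auto simp: good_def)
    hence "W (S + a - 1) (S + a) ((S + a) + sum_list rest) rest" using IH1 by blast
    thus ?thesis unfolding sumeq by (intro compose[OF L]) (use assms in auto)
  qed
next
  case False note Sev = False
  show ?thesis
  proof (cases "odd a")
    case True
    have L: "LW S (S - 1) (S + 1 + a - 1) (S + a) a (nshape (S + 1) (S + a) a)"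
      by (rule nshape_LW) (use assms True Sev in auto)
    have "good (S + 1 + a - 1) (S + a) (S + a)" using a True Sev by (auto simp: good_def)
    hence "W (S + 1 + a - 1) (S + a) ((S + a) + sum_list rest) rest" using IH1 by blast
    thus ?thesis unfolding sumeq by (intro compose[OF L]) (use assms in auto)
  next
    case False
    have L: "LW S (S - 1) (S + 1 + a - 1) (S + a - 1) a (nshape (S + 1) (S + a - 1) a)"
      by (rule nshape_LW) (use assms False Sev in auto)
    have "good (S + 1 + a - 1) (S + a - 1) (S + a)" using a by (auto simp: good_def)
    hence "W (S + 1 + a - 1) (S + a - 1) ((S + a) + sum_list rest) rest" using IH1 by blast
    thus ?thesis unfolding sumeq by (intro compose[OF L]) (use assms in auto)
  qed
qed

lemma caseT:
  assumes S: "even S" and a: "0 < a" and nb: "\<not> (\<exists>b. a # rest = [b] \<and> even b)"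
    and IH1: "\<forall>R V S. good R V S \<longrightarrow> W R V (S + sum_list rest) rest"
    and IH1': "\<And>b rest'. rest = b # rest' \<Longrightarrow> \<forall>R V S. good R V S \<longrightarrow> W R V (S + sum_list rest') rest'"
    and pos: "\<forall>x\<in>set rest. 0 < x"
  shows "W S S (S + sum_list (a # rest)) (a # rest)"
proof (cases "odd a")
  case True
  have L: "LW S S (S + 1 + a - 1) (S + a) a (nshape (S + 1) (S + a) a)"
    by (rule nshape_LW) (use assms True in auto)
  have "good (S + 1 + a - 1) (S + a) (S + a)" using a True S by (auto simp: good_def)
  hence "W (S + 1 + a - 1) (S + a) ((S + a) + sum_list rest) rest" using IH1 by blast
  thus ?thesis unfolding sumeq by (intro compose[OF L]) (use assms in auto)
next
  case False note aev = False
  then obtain b rest' where r: "rest = b # rest'" using nb by (cases rest) auto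
  have b: "0 < b" using pos r by simp
  have IH: "\<forall>R V S. good R V S \<longrightarrow> W R V (S + sum_list rest') rest'" using IH1'[OF r] .
  have a2: "2 \<le> a" using a aev by presburger
  have L: "LW S S (S + 1 + a) (S + a - 1) a (eshape (S + 1) (S + a - 1) a)"
    by (rule eshape_LW) (use assms a2 aev in auto)
  define R1 where "R1 = S + 1 + a"
  have R1odd: "odd R1" using S aev by (simp add: R1_def)
  have W2: "W R1 (S + a - 1) (S + a + sum_list rest) rest"
  proof (cases "odd b")
    case True
    have L2: "LW R1 (S + a - 1) (R1 + b - 1) (S + a + b) b (nshape R1 (S + a + b) b)"
      by (rule nshape_LW) (use assms True b R1odd in \<open>auto simp: R1_def\<close>)
    have "good (R1 + b - 1) (S + a + b) (S + a + b)" using a b True S aev by (auto simp: good_def R1_def)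
    hence "W (R1 + b - 1) (S + a + b) ((S + a + b) + sum_list rest') rest'" using IH by blast
    thus ?thesis unfolding r sumeq by (intro compose[OF L2]) (use assms b in \<open>auto simp: R1_def\<close>)
  next
    case False
    have L2: "LW R1 (S + a - 1) (R1 + b - 1) (S + a + b - 1) b (nshape R1 (S + a + b - 1) b)"
      by (rule nshape_LW) (use assms False b R1odd in \<open>auto simp: R1_def\<close>)
    have "good (R1 + b - 1) (S + a + b - 1) (S + a + b)" using a b by (auto simp: good_def R1_def)
    hence "W (R1 + b - 1) (S + a + b - 1) ((S + a + b) + sum_list rest') rest'" using IH by blast
    thus ?thesis unfolding r sumeq by (intro compose[OF L2]) (use assms b in \<open>auto simp: R1_def\<close>)
  qed
  show ?thesis unfolding sumeq by (rule compose[OF L W2[unfolded R1_def]]) (use assms b r in auto)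
qed

lemma main:
  "\<forall>x\<in>set ks. 0 < x \<Longrightarrow>
   (\<forall>R V S. good R V S \<longrightarrow> W R V (S + sum_list ks) ks) \<and>
   (\<forall>S. even S \<and> \<not> (\<exists>b. ks = [b] \<and> even b) \<longrightarrow> W S S (S + sum_list ks) ks)"
proof (induction ks rule: length_induct)
  case (1 ks)
  show ?case
  proof (cases ks)
    case Nil
    then show ?thesis by (simp add: W_Nil)
  next
    case (Cons a rest)
    have pos: "\<forall>x\<in>set rest. 0 < x" and a: "0 < a" using "1.prems" Cons by auto
    have IH: "(\<forall>R V S. good R V S \<longrightarrow> W R V (S + sum_list rest) rest) \<and>
      (\<forall>S. even S \<and> \<not> (\<exists>b. rest = [b] \<and> even b) \<longrightarrow> W S S (S + sum_list rest) rest)"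
      using "1.IH" Cons pos by simp
    have IH1': "\<And>b rest'. rest = b # rest' \<Longrightarrow> \<forall>R V S. good R V S \<longrightarrow> W R V (S + sum_list rest') rest'"
    proof -
      fix b rest' assume r: "rest = b # rest'"
      have "\<forall>x\<in>set rest'. 0 < x" using pos r by simp
      thus "\<forall>R V S. good R V S \<longrightarrow> W R V (S + sum_list rest') rest'"
        using "1.IH" Cons r by auto
    qed
    have P1: "\<forall>R V S. good R V S \<longrightarrow> W R V (S + sum_list ks) ks"
    proof (intro allI impI)
      fix R V S assume g: "good R V S"
      have S1: "1 \<le> S" using g by (cases S) (auto simp: good_def)
      show "W R V (S + sum_list ks) ks"
      proof (cases "V < S")
        case True
        have "W S (S - 1) (S + sum_list ks) ks" using caseC[OF S1 a] IH Cons by simp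
        thus ?thesis by (rule W_mono) (use g True in \<open>auto simp: good_def\<close>)
      next
        case False
        hence V: "V = S" using g by (auto simp: good_def)
        show ?thesis
        proof (cases "R < S")
          case True
          have "W (S - 1) S (S + sum_list ks) ks" using caseB[OF S1 a _ _ pos] IH Cons by simp
          thus ?thesis by (rule W_mono) (use True V in auto)
        next
          case False
          hence "R = S" "odd S" using g V by (auto simp: good_def)
          thus ?thesis using caseA[OF _ a _ _ pos] IH Cons V by simp
        qed
      qed
    qed
    have P2: "\<forall>S. even S \<and> \<not> (\<exists>b. ks = [b] \<and> even b) \<longrightarrow> W S S (S + sum_list ks) ks"
      using caseT[OF _ a _ _ IH1' pos] IH Cons by simp
    show ?thesis using P1 P2 by simp
  qed
qed



lemma length_Lay: "length (Lay ks) = sum_list ks"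
  by (induction ks) (auto simp: Lay_Cons dsum_def)

theorem proposition6p3:
  fixes n :: nat and pi :: "nat list"
  assumes "n \<ge> 1"
    and "is_perm pi" and "length pi = n"
    and "layered pi"
    and "\<not> (pi = decperm n \<and> even n)"
  shows "contains (zeta n) pi"
proof -
  obtain ks where ks: "pi = Lay ks" using assms(4) by (auto simp: layered_def Lay_def)
  define ks' where "ks' = filter (\<lambda>k. 0 < k) ks"
  have pk: "pi = Lay ks'" using ks by (simp add: ks'_def Lay_filter)
  have pos: "\<forall>x\<in>set ks'. 0 < x" by (simp add: ks'_def)
  have sn: "sum_list ks' = n" using pk assms(3) length_Lay by metis
  have nb: "\<not> (\<exists>b. ks' = [b] \<and> even b)"
  proof
    assume "\<exists>b. ks' = [b] \<and> even b"
    then obtain b where b: "ks' = [b]" "even b" by blast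
    hence "pi = decperm b" using pk by (simp add: Lay_Cons)
    moreover have "b = n" using sn b by simp
    ultimately show False using assms(5) b by simp
  qed
  have "W 0 0 (0 + sum_list ks') ks'" using conjunct2[OF main[OF pos], rule_format, of 0] nb by simp
  then obtain cs where cs: "emb cs (Lay ks')" "sorted_wrt posless cs"
    "\<forall>c\<in>set cs. cpar c \<and> inreg 0 0 c \<and> fst c \<le> n \<and> snd c \<le> n"
    using sn by (auto simp: W_def)
  have "\<forall>c\<in>set cs. cellok n c" using cs(3) by (auto simp: cellok_def cpar_def inreg_def)
  thus ?thesis using bridge[OF cs(1) cs(2)] pk by simp
qed


end
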